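(* Let $\pi\in\mathcal P(\mathbb R^d)$ satisfy the standing decomposition assumption with constants $\mathsf M,\mathsf L$, and let $h>0$. For the Random–Walk Metropolis kernel with step size $h$, the rejection probability $$r(x)=1-\mathbb E_{\xi\sim\mathcal N(0,I)}\Big[\min\Big\{1,\frac{\pi(x+h\xi)}{\pi(x)}\Big\}\Big]$$ satisfies, for every $x\in\mathbb R^d$, $$r(x)\ \le\ \frac12+\mathsf L h\sqrt d+\frac14\mathsf M h^2 d .$$
   Context: Standing decomposition assumption: $\pi$ has a positive density with $\log\pi(x)=f(x)+g(x)$, where $f$ is differentiable with $\|\nabla f(x)-\nabla f(y)\|\le \mathsf M\|x-y\|$ for all $x,y$, and $g$ is $\mathsf L$-Lipschitz: $|g(x)-g(y)|\le\mathsf L\|x-y\|$ for all $x,y$. Norms are Euclidean. *)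

theory Defs
  imports "HOL-Analysis.Analysis"
begin

definition std_normal_nd :: "('a::euclidean_space) measure" where
  "std_normal_nd = density lborel
     (\<lambda>x. ennreal ((2 * pi) powr (- real DIM('a) / 2) * exp (- (norm x)\<^sup>2 / 2)))"

definition rwm_rejection :: "('a::euclidean_space \<Rightarrow> real) \<Rightarrow> real \<Rightarrow> 'a \<Rightarrow> real" where
  "rwm_rejection \<pi> h x =
     1 - (\<integral>\<xi>. min 1 (\<pi> (x + h *\<^sub>R \<xi>) / \<pi> x) \<partial>std_normal_nd)"

end

theory Submission
  imports Defs "HOL-Probability.Probability"
begin


lemma dens_prod:
  "(2 * pi) powr (- real DIM('a) / 2) * exp (- (norm (x::'a::euclidean_space))\<^sup>2 / 2)
    = (\<Prod>b\<in>Basis. std_normal_density (x \<bullet> b))"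
proof -
  have "(\<Prod>b\<in>(Basis::'a set). std_normal_density (x \<bullet> b))
     = (\<Prod>b\<in>(Basis::'a set). 1 / sqrt (2*pi)) * (\<Prod>b\<in>(Basis::'a set). exp (- (x \<bullet> b)\<^sup>2 / 2))"
    by (subst prod.distrib[symmetric]) (simp add: std_normal_density_def)
  also have "(\<Prod>b\<in>(Basis::'a set). 1 / sqrt (2*pi)) = (2 * pi) powr (- real DIM('a) / 2)"
  proof -
    have "(\<Prod>b\<in>(Basis::'a set). 1 / sqrt (2*pi)) = (1 / sqrt (2*pi)) ^ DIM('a)" by simp
    also have "\<dots> = ((2*pi) powr (-1/2)) ^ DIM('a)"
      by (simp add: powr_minus_divide powr_half_sqrt[symmetric])
    also have "\<dots> = (2 * pi) powr (- real DIM('a) / 2)"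
      by (simp add: powr_realpow[symmetric] powr_powr)
    finally show ?thesis .
  qed
  also have "(\<Prod>b\<in>(Basis::'a set). exp (- (x \<bullet> b)\<^sup>2 / 2)) = exp (- (norm x)\<^sup>2 / 2)"
  proof -
    have "(\<Prod>b\<in>(Basis::'a set). exp (- (x \<bullet> b)\<^sup>2 / 2)) = exp (\<Sum>b\<in>(Basis::'a set). - (x \<bullet> b)\<^sup>2 / 2)"
      by (simp add: exp_sum)
    also have "(\<Sum>b\<in>(Basis::'a set). - (x \<bullet> b)\<^sup>2 / 2) = - (norm x)\<^sup>2 / 2"
      using euclidean_inner[of x x]
      by (simp add: sum_divide_distrib[symmetric] sum_negf power2_eq_square flip: power2_norm_eq_inner)
    finally show ?thesis .
  qed
  finally show ?thesis by simp
qed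

lemma nn_std: "(\<integral>\<^sup>+x. ennreal (std_normal_density x) \<partial>lborel) = 1"
  by (subst nn_integral_eq_integral) auto

lemma nn_std2: "(\<integral>\<^sup>+x. ennreal (std_normal_density x * x\<^sup>2) \<partial>lborel) = 1"
proof -
  have "integral\<^sup>L lborel (\<lambda>x. std_normal_density x * x^(2*1)) = 1"
    using integral_std_normal_moment_even[of 1] by simp
  then show ?thesis
    using integrable_std_normal_moment[of 2]
    by (subst nn_integral_eq_integral) auto
qed

definition dens :: "'a::euclidean_space \<Rightarrow> real" where
  "dens x = (2 * pi) powr (- real DIM('a) / 2) * exp (- (norm x)\<^sup>2 / 2)"

lemma dens_prod': "dens x = (\<Prod>b\<in>Basis. std_normal_density (x \<bullet> b))"
  unfolding dens_def by (rule dens_prod)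

lemma dens_nonneg: "dens x \<ge> 0" by (simp add: dens_def)

lemma dens_meas[measurable]: "dens \<in> borel_measurable borel"
  unfolding dens_def by measurable

lemma N_def': "std_normal_nd = density lborel (\<lambda>x. ennreal (dens x))"
  unfolding std_normal_nd_def dens_def ..

lemma nn_dens: "(\<integral>\<^sup>+x. ennreal (dens (x::'a::euclidean_space)) \<partial>lborel) = 1"
proof -
  have "(\<integral>\<^sup>+x. ennreal (dens (x::'a)) \<partial>lborel)
      = (\<integral>\<^sup>+x. (\<Prod>b\<in>Basis. ennreal (std_normal_density ((x::'a) \<bullet> b))) \<partial>lborel)"
    by (simp add: dens_prod' prod_ennreal)
  also have "\<dots> = (\<Prod>b\<in>(Basis::'a set). (\<integral>\<^sup>+x. ennreal (std_normal_density x) \<partial>lborel))"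
    by (rule nn_integral_lborel_prod) auto
  finally show ?thesis by (simp add: nn_std)
qed

lemma N_prob: "prob_space (std_normal_nd :: 'a::euclidean_space measure)"
  apply (rule prob_spaceI)
  apply (simp add: N_def' emeasure_density nn_dens)
  done

lemma nn_dens_sq: "(\<integral>\<^sup>+x. ennreal (dens (x::'a::euclidean_space) * (norm x)\<^sup>2) \<partial>lborel) = DIM('a)"
proof -
  have eq: "dens x * (norm x)\<^sup>2 = (\<Sum>c\<in>Basis. (\<Prod>b\<in>Basis. std_normal_density (x \<bullet> b) * (if b = c then (x \<bullet> b)\<^sup>2 else 1)))"
    for x :: 'a
  proof -
    have "(\<Sum>c\<in>Basis. (\<Prod>b\<in>Basis. std_normal_density (x \<bullet> b) * (if b = c then (x \<bullet> b)\<^sup>2 else 1)))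
       = (\<Sum>c\<in>Basis. dens x * (x \<bullet> c)\<^sup>2)"
      by (simp add: prod.distrib prod.delta dens_prod')
    also have "\<dots> = dens x * (norm x)\<^sup>2"
      using euclidean_inner[of x x]
      by (simp add: sum_distrib_left[symmetric] power2_eq_square flip: power2_norm_eq_inner)
    finally show ?thesis by simp
  qed
  have "(\<integral>\<^sup>+x. ennreal (dens (x::'a) * (norm x)\<^sup>2) \<partial>lborel)
     = (\<integral>\<^sup>+x. (\<Sum>c\<in>Basis. (\<Prod>b\<in>Basis. ennreal (std_normal_density ((x::'a) \<bullet> b) * (if b = c then (x \<bullet> b)\<^sup>2 else 1)))) \<partial>lborel)"
    apply (intro nn_integral_cong)
    apply (subst eq)
    apply (subst sum_ennreal[symmetric])
     apply (simp add: prod_nonneg)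
    apply (intro sum.cong refl)
    apply (subst prod_ennreal)
     apply auto
    done
  also have "\<dots> = (\<Sum>c\<in>(Basis::'a set). (\<integral>\<^sup>+x. (\<Prod>b\<in>Basis. ennreal (std_normal_density (x \<bullet> b) * (if b = c then (x \<bullet> b)\<^sup>2 else 1))) \<partial>lborel))"
    by (rule nn_integral_sum) auto
  also have "\<dots> = (\<Sum>c\<in>(Basis::'a set). (\<Prod>b\<in>(Basis::'a set). (\<integral>\<^sup>+t. ennreal (std_normal_density t * (if b = c then t\<^sup>2 else 1)) \<partial>lborel)))"
    apply (intro sum.cong refl)
    apply (rule nn_integral_lborel_prod[where f = "\<lambda>b t. ennreal (std_normal_density t * (if b = _ then t\<^sup>2 else 1))", simplified])
    done
  also have "\<dots> = (\<Sum>c\<in>(Basis::'a set). 1)"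
  proof -
    have "(\<integral>\<^sup>+t. ennreal (std_normal_density t * (if b = c then t\<^sup>2 else 1)) \<partial>lborel) = 1" for b c :: 'a
      by (cases "b = c") (simp_all add: nn_std nn_std2)
    then show ?thesis by simp
  qed
  finally show ?thesis by simp
qed

lemma N_sq: "has_bochner_integral std_normal_nd (\<lambda>x. (norm (x::'a::euclidean_space))\<^sup>2) (real DIM('a))"
  apply (rule has_bochner_integral_nn_integral)
     apply (auto simp: N_def' nn_integral_density)
  apply (subst ennreal_mult'[symmetric])
  apply (auto simp: dens_nonneg nn_dens_sq)
  by (metis ennreal_of_nat_eq_real_of_nat)

lemma lborel_uminus: "distr lborel borel uminus = (lborel :: 'a::euclidean_space measure)"
  using lborel_affine[of "-1::real" "0::'a"] by (simp add: density_1 comp_def)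

lemma N_sym:
  fixes \<phi> :: "'a::euclidean_space \<Rightarrow> real"
  assumes [measurable]: "\<phi> \<in> borel_measurable borel"
  shows "(\<integral>x. \<phi> (-x) \<partial>std_normal_nd) = (\<integral>x. \<phi> x \<partial>std_normal_nd)"
proof -
  have "(\<integral>x. \<phi> (-x) \<partial>std_normal_nd) = (\<integral>x. dens x * \<phi> (-x) \<partial>lborel)"
    by (simp add: N_def' integral_density dens_nonneg)
  also have "\<dots> = (\<integral>x. dens (-x) * \<phi> (-x) \<partial>lborel)"
    by (simp add: dens_def)
  also have "\<dots> = (\<integral>x. dens x * \<phi> x \<partial>distr lborel borel uminus)"
    by (subst integral_distr) auto
  also have "\<dots> = (\<integral>x. \<phi> x \<partial>std_normal_nd)"
    by (simp add: lborel_uminus N_def' integral_density dens_nonneg)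
  finally show ?thesis .
qed



lemma taylor_lower:
  fixes f :: "'a::euclidean_space \<Rightarrow> real" and gradf :: "'a \<Rightarrow> 'a"
  assumes f_diff: "\<And>x. (f has_derivative (\<lambda>v. gradf x \<bullet> v)) (at x)"
    and f_smooth: "\<And>x y. norm (gradf x - gradf y) \<le> M * norm (x - y)"
  shows "f (x + v) - f x \<ge> gradf x \<bullet> v - M / 2 * (norm v)\<^sup>2"
proof -
  define F where "F t = f (x + t *\<^sub>R v) - t * (gradf x \<bullet> v) + M / 2 * t\<^sup>2 * (norm v)\<^sup>2" for t
  have der: "(F has_real_derivative (gradf (x + t *\<^sub>R v) \<bullet> v - gradf x \<bullet> v + M * t * (norm v)\<^sup>2)) (at t)" for t
  proof -
    have d1: "((\<lambda>t. x + t *\<^sub>R v) has_derivative (\<lambda>s. s *\<^sub>R v)) (at t)"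
      by (auto intro!: derivative_eq_intros)
    have d2: "((\<lambda>t. f (x + t *\<^sub>R v)) has_derivative (\<lambda>s. gradf (x + t *\<^sub>R v) \<bullet> (s *\<^sub>R v))) (at t)"
      using has_derivative_compose[OF d1 f_diff] by (simp add: o_def)
    then have d3: "((\<lambda>t. f (x + t *\<^sub>R v)) has_real_derivative (gradf (x + t *\<^sub>R v) \<bullet> v)) (at t)"
      by (simp add: has_real_derivative_iff_has_vector_derivative has_vector_derivative_def mult.commute)
    show ?thesis unfolding F_def
      by (auto intro!: derivative_eq_intros d3 simp: power2_eq_square algebra_simps)
  qed
  have nn: "gradf (x + t *\<^sub>R v) \<bullet> v - gradf x \<bullet> v + M * t * (norm v)\<^sup>2 \<ge> 0" if "t \<ge> 0" for t
  proof -
    have "\<bar>(gradf (x + t *\<^sub>R v) - gradf x) \<bullet> v\<bar> \<le> norm (gradf (x + t *\<^sub>R v) - gradf x) * norm v"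
      by (rule Cauchy_Schwarz_ineq2)
    also have "\<dots> \<le> (M * norm (t *\<^sub>R v)) * norm v"
      using f_smooth[of "x + t *\<^sub>R v" x] by (intro mult_right_mono) auto
    also have "\<dots> = M * t * (norm v)\<^sup>2" using that by (simp add: power2_eq_square)
    finally show ?thesis by (simp add: inner_diff_left)
  qed
  have "F 0 \<le> F 1"
  proof (rule DERIV_nonneg_imp_nondecreasing[of 0 1 F])
    fix t :: real assume "0 \<le> t" "t \<le> 1"
    then show "\<exists>y. (F has_real_derivative y) (at t) \<and> 0 \<le> y"
      using der[of t] nn[of t] by (intro exI[of _ "gradf (x + t *\<^sub>R v) \<bullet> v - gradf x \<bullet> v + M * t * (norm v)\<^sup>2"]) simp
  qed simp
  then show ?thesis by (simp add: F_def)
qed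

lemma min_exp_bound:
  fixes a c :: real
  assumes "a \<ge> -c" "c \<ge> 0"
  shows "min 1 (exp a) \<ge> 1 - c"
proof -
  have "exp (-c) \<le> exp a" using assms by simp
  moreover have "1 - c \<le> exp (-c)" using exp_ge_add_one_self[of "-c"] by simp
  ultimately have "1 - c \<le> exp a" by linarith
  then show ?thesis using assms by (simp add: min_def)
qed

theorem mainTheorem3:
  fixes \<pi> :: "'a::euclidean_space \<Rightarrow> real"
    and f g :: "'a \<Rightarrow> real" and gradf :: "'a \<Rightarrow> 'a"
    and M L h :: real
  assumes meas: "\<pi> \<in> borel_measurable lborel"
    and integ: "integrable lborel \<pi>"
    and prob: "(\<integral>x. \<pi> x \<partial>lborel) = 1"
    and pos: "\<And>x. \<pi> x > 0"
    and decomp: "\<And>x. ln (\<pi> x) = f x + g x"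
    and f_diff: "\<And>x. (f has_derivative (\<lambda>v. gradf x \<bullet> v)) (at x)"
    and f_smooth: "\<And>x y. norm (gradf x - gradf y) \<le> M * norm (x - y)"
    and g_lip: "\<And>x y. \<bar>g x - g y\<bar> \<le> L * norm (x - y)"
    and h_pos: "h > 0"
  shows "rwm_rejection \<pi> h x
           \<le> 1/2 + L * h * sqrt (real DIM('a)) + 1/4 * M * h\<^sup>2 * real DIM('a)"
proof -
  obtain e :: 'a where e: "e \<in> Basis" using nonempty_Basis by blast
  have M0: "M \<ge> 0" using f_smooth[of e e] e
    by (metis norm_ge_zero f_smooth[of e 0] diff_zero norm_Basis mult.right_neutral order_trans)
  have L0: "L \<ge> 0" using e
    by (metis abs_ge_zero g_lip[of e 0] diff_zero norm_Basis mult.right_neutral order_trans)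
  define d where "d = real DIM('a)"
  define s where "s = sqrt d"
  have d1: "d \<ge> 1" unfolding d_def by simp
  have s0: "s > 0" unfolding s_def using d1 by simp
  have ss: "s * s = d" unfolding s_def using d1 by simp
  define \<phi> where "\<phi> \<xi> = min 1 (\<pi> (x + h *\<^sub>R \<xi>) / \<pi> x)" for \<xi>
  define A where "A = M * h\<^sup>2 / 2 + L * h / (2 * s)"
  define B where "B = L * h * s / 2"
  have A0: "A \<ge> 0" unfolding A_def using M0 L0 h_pos s0 by simp
  have ratio: "\<pi> (x + v) / \<pi> x = exp ((f (x + v) - f x) + (g (x + v) - g x))" for v
  proof -
    have "\<pi> y = exp (f y + g y)" for y using pos[of y] decomp[of y] by (metis exp_ln)
    then show ?thesis by (simp add: exp_diff[symmetric] algebra_simps)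
  qed
  have lower: "(f (x + v) - f x) + (g (x + v) - g x) \<ge> gradf x \<bullet> v - (M / 2 * (norm v)\<^sup>2 + L * norm v)" for v
  proof -
    have "f (x + v) - f x \<ge> gradf x \<bullet> v - M / 2 * (norm v)\<^sup>2"
      by (rule taylor_lower[OF f_diff f_smooth])
    moreover have "g (x + v) - g x \<ge> - (L * norm v)" using g_lip[of "x + v" x] by simp
    ultimately show ?thesis by simp
  qed
  have pw: "\<phi> \<xi> + \<phi> (-\<xi>) \<ge> 1 - (A * (norm \<xi>)\<^sup>2 + B)" for \<xi>
  proof -
    define b where "b = gradf x \<bullet> (h *\<^sub>R \<xi>)"
    define c where "c = M * h\<^sup>2 / 2 * (norm \<xi>)\<^sup>2 + L * h * norm \<xi>"
    have c0: "c \<ge> 0" unfolding c_def using M0 L0 h_pos by simp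
    have l1: "(f (x + h *\<^sub>R \<xi>) - f x) + (g (x + h *\<^sub>R \<xi>) - g x) \<ge> b - c"
      using lower[of "h *\<^sub>R \<xi>"] h_pos by (simp add: b_def c_def power_mult_distrib)
    have l2: "(f (x + h *\<^sub>R (-\<xi>)) - f x) + (g (x + h *\<^sub>R (-\<xi>)) - g x) \<ge> -b - c"
      using lower[of "h *\<^sub>R (-\<xi>)"] h_pos by (simp add: b_def c_def power_mult_distrib)
    have p1: "\<phi> \<xi> \<ge> 0" "\<phi> (-\<xi>) \<ge> 0" unfolding \<phi>_def using pos by (simp_all add: less_imp_le)
    have "\<phi> \<xi> + \<phi> (-\<xi>) \<ge> 1 - c"
    proof (cases "b \<ge> 0")
      case True
      have "\<phi> \<xi> \<ge> 1 - c" unfolding \<phi>_def ratio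
        by (rule min_exp_bound) (use l1 True c0 in auto)
      then show ?thesis using p1 by simp
    next
      case False
      have "\<phi> (-\<xi>) \<ge> 1 - c" unfolding \<phi>_def ratio
        by (rule min_exp_bound) (use l2 False c0 in auto)
      then show ?thesis using p1 by simp
    qed
    moreover have "c \<le> A * (norm \<xi>)\<^sup>2 + B"
    proof -
      have "norm \<xi> \<le> ((norm \<xi>)\<^sup>2 / s + s) / 2"
      proof -
        have "0 \<le> (norm \<xi> - s)\<^sup>2" by simp
        then have "2 * s * norm \<xi> \<le> (norm \<xi>)\<^sup>2 + s * s" by (simp add: power2_eq_square algebra_simps)
        then show ?thesis using s0 by (simp add: field_simps)
      qed
      then have "L * h * norm \<xi> \<le> L * h * (((norm \<xi>)\<^sup>2 / s + s) / 2)"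
        using L0 h_pos by (intro mult_left_mono) auto
      then show ?thesis unfolding c_def A_def B_def using s0 by (simp add: field_simps)
    qed
    ultimately show ?thesis by simp
  qed
  let ?N = "std_normal_nd :: 'a measure"
  interpret P: prob_space ?N by (rule N_prob)
  have sets_N: "sets ?N = sets borel" by (simp add: N_def')
  have meas_pi[measurable]: "\<pi> \<in> borel_measurable borel" using meas by simp
  have phi_meas: "\<phi> \<in> borel_measurable borel" unfolding \<phi>_def by measurable
  have phi_measN: "\<phi> \<in> borel_measurable ?N" using phi_meas by (simp add: measurable_cong_sets[OF sets_N refl])
  have phim_measN: "(\<lambda>\<xi>. \<phi> (-\<xi>)) \<in> borel_measurable ?N"
    using phi_meas by (simp add: measurable_cong_sets[OF sets_N refl])
  have bnd: "norm (\<phi> \<xi>) \<le> 1" for \<xi> unfolding \<phi>_def using pos[of x] pos[of "x + h *\<^sub>R \<xi>"] by auto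
  have int1: "integrable ?N \<phi>" by (rule P.integrable_const_bound[of _ 1]) (use bnd phi_measN in auto)
  have int2: "integrable ?N (\<lambda>\<xi>. \<phi> (-\<xi>))" by (rule P.integrable_const_bound[of _ 1]) (use bnd phim_measN in auto)
  have int3: "integrable ?N (\<lambda>\<xi>. (norm \<xi>)\<^sup>2)" using N_sq by (rule integrable.intros)
  have I3: "(\<integral>\<xi>. (norm \<xi>)\<^sup>2 \<partial>?N) = d" unfolding d_def using N_sq by (rule has_bochner_integral_integral_eq)
  have "(\<integral>\<xi>. 1 - (A * (norm \<xi>)\<^sup>2 + B) \<partial>?N) \<le> (\<integral>\<xi>. \<phi> \<xi> + \<phi> (-\<xi>) \<partial>?N)"
    by (rule integral_mono) (use int1 int2 int3 pw in auto)
  also have "(\<integral>\<xi>. \<phi> \<xi> + \<phi> (-\<xi>) \<partial>?N) = 2 * (\<integral>\<xi>. \<phi> \<xi> \<partial>?N)"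
    using int1 int2 N_sym[OF phi_meas] by simp
  also have "(\<integral>\<xi>. 1 - (A * (norm \<xi>)\<^sup>2 + B) \<partial>?N) = 1 - (A * d + B)"
    using int3 I3 by (simp add: P.prob_space)
  finally have key: "1 - (A * d + B) \<le> 2 * (\<integral>\<xi>. \<phi> \<xi> \<partial>?N)" .
  have Ad: "A * d + B = M * h\<^sup>2 * d / 2 + L * h * s"
    unfolding A_def B_def using s0 ss[symmetric] by (simp add: field_simps)
  have "rwm_rejection \<pi> h x = 1 - (\<integral>\<xi>. \<phi> \<xi> \<partial>?N)"
    unfolding rwm_rejection_def \<phi>_def ..
  also have "\<dots> \<le> 1/2 + L * h * s / 2 + 1/4 * M * h\<^sup>2 * d"
    using key Ad by simp
  also have "\<dots> \<le> 1/2 + L * h * s + 1/4 * M * h\<^sup>2 * d"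
    using L0 h_pos s0 by simp
  finally show ?thesis unfolding s_def d_def .
qed

end
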